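(* Let $G'$ be a finite loopless multigraph with edge multiplicity at most $2$ and maximum degree $\Delta>10^{20}$, let $H$ be the subgraph of $G'$ induced by the vertices of degree less than $\Delta/3$, assume $H$ has no multiple edges, and let $\sigma$ be a proper edge coloring of $G'$. Let $\sigma_1$ be a possible outcome of Phase I applied to $\sigma$ such that (a) $|N(v)\cap L|\le\Delta/100$ for every $v\in V(G')\setminus V(H)$, and (b) $|S_{\sigma_1}(u)\triangle S_{\sigma_1}(v)|\ge 10$ for every two adjacent $u,v\in V(G')\setminus V(H)$ with $\deg(u)=\deg(v)$ and $u\notin L$. Apply Phase II (defined in the context) to $\sigma_1$, obtaining $\sigma_2$. Then with positive probability: (a) for every vertex $v\in V(G')\setminus V(H)\setminus L$, $|UC'_v|\le 4$; (b) for every two adjacent vertices $u,v\in V(G')\setminus V(H)$ with $\deg(u)=\deg(v)$, $S_{\sigma_2}(u)\neq S_{\sigma_2}(v)$.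
   Context: Phase I: (1) each edge $e\in E(G')\setminus E(H)$ is independently "uncolored" with probability $180/\Delta$; $UC_v$ is the set of edges at $v$ uncolored in this step. (2) A vertex $v$ is recovered if $|UC_v|>290$; for every recovered vertex all edges of $UC_v$ get back their $\sigma$-color. The result $\sigma_1$: an edge is uncolored iff it was uncolored in step (1) and neither endpoint is recovered. $L$ is the set of vertices $v\in V(G')\setminus V(H)$ incident to fewer than $20$ edges uncolored in $\sigma_1$. Phase II: for each vertex $u\in L$, independently choose uniformly at random $5$ edges $uv_1,\dots,uv_5$ with $v_i\notin L$ and $uv_i$ colored in $\sigma_1$, and uncolor them; the result is $\sigma_2$. For $u\in V(G')\setminus V(H)$, $UC'_u$ is the set of edges incident to $u$ uncolored in Phase II. $S_c(v)$ is the set of colors on colored edges at $v$ under partial coloring $c$; $A\triangle B=(A\setminus B)\cup(B\setminus A)$; $N(v)$ is the neighborhood of $v$ in $G'$. *)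

theory Defs
  imports "HOL-Probability.Probability"
begin

definition multigraph2 :: "'v set \<Rightarrow> 'e set \<Rightarrow> ('e \<Rightarrow> 'v set) \<Rightarrow> bool" where
  "multigraph2 V E ends \<longleftrightarrow> finite V \<and> finite E \<and>
     (\<forall>e\<in>E. ends e \<subseteq> V \<and> card (ends e) = 2) \<and>
     (\<forall>u v. card {e\<in>E. ends e = {u, v}} \<le> 2)"

definition deg :: "'e set \<Rightarrow> ('e \<Rightarrow> 'v set) \<Rightarrow> 'v \<Rightarrow> nat" where
  "deg E ends v = card {e\<in>E. v \<in> ends e}"

definition maxdeg :: "'v set \<Rightarrow> 'e set \<Rightarrow> ('e \<Rightarrow> 'v set) \<Rightarrow> nat" where
  "maxdeg V E ends = Max (deg E ends ` V)"

definition adjacent :: "'e set \<Rightarrow> ('e \<Rightarrow> 'v set) \<Rightarrow> 'v \<Rightarrow> 'v \<Rightarrow> bool" where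
  "adjacent E ends u v \<longleftrightarrow> (\<exists>e\<in>E. ends e = {u, v})"

definition nbhd :: "'e set \<Rightarrow> ('e \<Rightarrow> 'v set) \<Rightarrow> 'v \<Rightarrow> 'v set" where
  "nbhd E ends v = {w. adjacent E ends v w}"

definition HV :: "'v set \<Rightarrow> 'e set \<Rightarrow> ('e \<Rightarrow> 'v set) \<Rightarrow> 'v set" where
  "HV V E ends = {v\<in>V. real (deg E ends v) < real (maxdeg V E ends) / 3}"

definition HE :: "'v set \<Rightarrow> 'e set \<Rightarrow> ('e \<Rightarrow> 'v set) \<Rightarrow> 'e set" where
  "HE V E ends = {e\<in>E. ends e \<subseteq> HV V E ends}"

definition proper_edge_coloring :: "'e set \<Rightarrow> ('e \<Rightarrow> 'v set) \<Rightarrow> ('e \<Rightarrow> 'c) \<Rightarrow> bool" where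
  "proper_edge_coloring E ends \<sigma> \<longleftrightarrow>
     (\<forall>e\<in>E. \<forall>f\<in>E. e \<noteq> f \<and> ends e \<inter> ends f \<noteq> {} \<longrightarrow> \<sigma> e \<noteq> \<sigma> f)"

text \<open>Colors on colored edges at v under a partial coloring (None = uncolored).\<close>
definition Scol :: "'e set \<Rightarrow> ('e \<Rightarrow> 'v set) \<Rightarrow> ('e \<Rightarrow> 'c option) \<Rightarrow> 'v \<Rightarrow> 'c set" where
  "Scol E ends c v = {col. \<exists>e\<in>E. v \<in> ends e \<and> c e = Some col}"

text \<open>Phase I, for a given set U of edges uncolored in step (1).\<close>
definition UC :: "'e set \<Rightarrow> ('e \<Rightarrow> 'v set) \<Rightarrow> 'v \<Rightarrow> 'e set" where
  "UC U ends v = {e\<in>U. v \<in> ends e}"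

definition recovered :: "'e set \<Rightarrow> ('e \<Rightarrow> 'v set) \<Rightarrow> 'v \<Rightarrow> bool" where
  "recovered U ends v \<longleftrightarrow> card (UC U ends v) > 290"

definition phase1 :: "'e set \<Rightarrow> ('e \<Rightarrow> 'v set) \<Rightarrow> ('e \<Rightarrow> 'c) \<Rightarrow> 'e \<Rightarrow> 'c option" where
  "phase1 U ends \<sigma> e =
     (if e \<in> U \<and> (\<forall>v\<in>ends e. \<not> recovered U ends v) then None else Some (\<sigma> e))"

definition Lset :: "'v set \<Rightarrow> 'e set \<Rightarrow> ('e \<Rightarrow> 'v set) \<Rightarrow> ('e \<Rightarrow> 'c option) \<Rightarrow> 'v set" where
  "Lset V E ends c1 = {v\<in>V - HV V E ends. card {e\<in>E. v \<in> ends e \<and> c1 e = None} < 20}"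

definition cand :: "'v set \<Rightarrow> 'e set \<Rightarrow> ('e \<Rightarrow> 'v set) \<Rightarrow> ('e \<Rightarrow> 'c option) \<Rightarrow> 'v \<Rightarrow> 'e set" where
  "cand V E ends c1 u = {e\<in>E. u \<in> ends e \<and> c1 e \<noteq> None \<and>
      (\<forall>w\<in>ends e. w \<noteq> u \<longrightarrow> w \<notin> Lset V E ends c1)}"

definition phase2_dist :: "'v set \<Rightarrow> 'e set \<Rightarrow> ('e \<Rightarrow> 'v set) \<Rightarrow> ('e \<Rightarrow> 'c option) \<Rightarrow> ('v \<Rightarrow> 'e set) pmf" where
  "phase2_dist V E ends c1 =
     Pi_pmf (Lset V E ends c1) {}
       (\<lambda>u. pmf_of_set {S. S \<subseteq> cand V E ends c1 u \<and> card S = 5})"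

definition phase2 :: "'v set \<Rightarrow> 'e set \<Rightarrow> ('e \<Rightarrow> 'v set) \<Rightarrow> ('e \<Rightarrow> 'c option) \<Rightarrow> ('v \<Rightarrow> 'e set) \<Rightarrow> 'e \<Rightarrow> 'c option" where
  "phase2 V E ends c1 ch e =
     (if \<exists>u\<in>Lset V E ends c1. e \<in> ch u then None else c1 e)"

definition UC2 :: "'v set \<Rightarrow> 'e set \<Rightarrow> ('e \<Rightarrow> 'v set) \<Rightarrow> ('e \<Rightarrow> 'c option) \<Rightarrow> ('v \<Rightarrow> 'e set) \<Rightarrow> 'v \<Rightarrow> 'e set" where
  "UC2 V E ends c1 ch u = {e\<in>E. u \<in> ends e \<and> (\<exists>w\<in>Lset V E ends c1. e \<in> ch w)}"

end

theory Submission
  imports Defs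
begin

lemma fib_card:
  assumes "finite A" "finite T"
  shows "(\<Sum>t\<in>T. card {e\<in>A. f e = t}) = card {e\<in>A. f e \<in> T}"
proof -
  have "{e\<in>A. f e \<in> T} = (\<Union>t\<in>T. {e\<in>A. f e = t})" by auto
  moreover have "card (\<Union>t\<in>T. {e\<in>A. f e = t}) = (\<Sum>t\<in>T. card {e\<in>A. f e = t})"
    by (rule card_UN_disjoint) (use assms in auto)
  ultimately show ?thesis by simp
qed

lemma card_ins_filter:
  assumes "finite A" "b \<notin> A"
  shows "card {e \<in> insert b A. P e} = card {e\<in>A. P e} + (if P b then 1 else 0)"
proof (cases "P b")
  case True
  then have "{e \<in> insert b A. P e} = insert b {e\<in>A. P e}" by auto
  then show ?thesis using assms True by simp
next
  case False
  then have "{e \<in> insert b A. P e} = {e\<in>A. P e}" by auto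
  then show ?thesis using False by simp
qed

lemma card_swap_filter:
  assumes "finite A" "r \<in> A" "b \<notin> A"
  shows "card {e \<in> insert b (A - {r}). P e} + (if P r then 1 else 0) = card {e\<in>A. P e} + (if P b then 1 else 0)"
proof -
  have f: "finite (A - {r})" using assms by simp
  have "card {e \<in> insert b (A - {r}). P e} = card {e\<in>A - {r}. P e} + (if P b then 1 else 0)"
    using card_ins_filter[OF f, of b P] assms by simp
  moreover have "card {e\<in>A. P e} = card {e\<in>A - {r}. P e} + (if P r then 1 else 0)"
  proof (cases "P r")
    case True
    then have "{e\<in>A. P e} = insert r {e\<in>A - {r}. P e}" using assms by auto
    then show ?thesis using True f by simp
  next
    case False
    then have "{e\<in>A. P e} = {e\<in>A - {r}. P e}" by auto
    then show ?thesis using False by simp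
  qed
  ultimately show ?thesis by simp
qed

locale augm =
  fixes L :: "'a set" and cand :: "'a \<Rightarrow> 'e set" and tgt :: "'e \<Rightarrow> 't" and Cap :: "'t set"
    and G :: "'a \<Rightarrow> 'a \<Rightarrow> bool" and F :: "'a \<Rightarrow> 'e set \<Rightarrow> 'z"
    and cr gr Dr :: real
  assumes finL: "finite L"
    and fincand: "\<And>x. x \<in> L \<Longrightarrow> finite (cand x)"
    and symG: "\<And>x y. G x y \<Longrightarrow> G y x"
    and gbound: "\<And>x. x \<in> L \<Longrightarrow> real (card {y\<in>L. G x y \<and> y \<noteq> x}) \<le> gr"
    and Dbound: "\<And>t. t \<in> Cap \<Longrightarrow> real (\<Sum>x\<in>L. card {e\<in>cand x. tgt e = t}) \<le> Dr"
    and cbound: "\<And>x. x \<in> L \<Longrightarrow> cr \<le> real (card (cand x))"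
    and Finj: "\<And>x B b b'. x \<in> L \<Longrightarrow> b \<in> cand x \<Longrightarrow> b' \<in> cand x \<Longrightarrow> b \<notin> B \<Longrightarrow> b' \<notin> B
                 \<Longrightarrow> F x (insert b B) = F x (insert b' B) \<Longrightarrow> b = b'"
    and Dnn: "0 \<le> Dr"
    and num: "5 * Dr < 4 * (cr - 5 - gr)"
begin

definition ld where "ld s t = (\<Sum>x\<in>L. card {e\<in>s x. tgt e = t})"
definition tot where "tot s = (\<Sum>x\<in>L. card (s x))"
definition wfa where "wfa s \<longleftrightarrow> (\<forall>x\<in>L. s x \<subseteq> cand x \<and> card (s x) \<le> 5) \<and> (\<forall>x. x \<notin> L \<longrightarrow> s x = {})"
definition cfree where "cfree s \<longleftrightarrow> (\<forall>x\<in>L. \<forall>y\<in>L. G x y \<and> x \<noteq> y \<and> card (s x) = 5 \<and> card (s y) = 5 \<longrightarrow> F x (s x) \<noteq> F y (s y))"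
definition vld where "vld s \<longleftrightarrow> wfa s \<and> (\<forall>t\<in>Cap. ld s t \<le> 4) \<and> cfree s"
definition okF where "okF s y B b \<longleftrightarrow> (card (insert b B) = 5 \<longrightarrow> (\<forall>z\<in>L. G y z \<and> z \<noteq> y \<and> card (s z) = 5 \<longrightarrow> F y (insert b B) \<noteq> F z (s z)))"

inductive_set Reach :: "('a \<Rightarrow> 'e set) \<Rightarrow> 'a \<Rightarrow> (('a \<Rightarrow> 'e set) \<times> 't) set" for ch u where
  start: "b \<in> cand u - ch u \<Longrightarrow> okF ch u (ch u) b \<Longrightarrow> tgt b \<in> Cap \<Longrightarrow> 4 \<le> ld ch (tgt b)
     \<Longrightarrow> (ch(u := insert b (ch u)), tgt b) \<in> Reach ch u"
| step: "(s, h) \<in> Reach ch u \<Longrightarrow> y \<in> L \<Longrightarrow> r \<in> s y \<Longrightarrow> tgt r = h \<Longrightarrow> b \<in> cand y - s y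
     \<Longrightarrow> okF s y (s y - {r}) b \<Longrightarrow> tgt b \<in> Cap \<Longrightarrow> 4 \<le> ld ch (tgt b)
     \<Longrightarrow> (s(y := insert b (s y - {r})), tgt b) \<in> Reach ch u"

definition ctx where "ctx ch u s0 y B \<longleftrightarrow> (s0 = ch \<and> y = u \<and> B = ch u) \<or>
   (\<exists>h r. (s0, h) \<in> Reach ch u \<and> y \<in> L \<and> r \<in> s0 y \<and> tgt r = h \<and> B = s0 y - {r})"

lemma move_wf:
  assumes "wfa s" "y \<in> L" "B \<subseteq> s y" "b \<in> cand y" "card (insert b B) \<le> 5"
  shows "wfa (s(y := insert b B))"
  using assms by (auto simp: wfa_def)

lemma move_cfree:
  assumes "cfree s" "y \<in> L" "okF s y B b"
  shows "cfree (s(y := insert b B))"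
  unfolding cfree_def
proof (intro ballI impI)
  fix x z assume x: "x \<in> L" and z: "z \<in> L"
    and h: "G x z \<and> x \<noteq> z \<and> card ((s(y := insert b B)) x) = 5 \<and> card ((s(y := insert b B)) z) = 5"
  show "F x ((s(y := insert b B)) x) \<noteq> F z ((s(y := insert b B)) z)"
  proof (cases "x = y")
    case True
    then have "z \<noteq> y" using h by auto
    then show ?thesis using assms(3) True h z unfolding okF_def by auto
  next
    case False
    show ?thesis
    proof (cases "z = y")
      case True
      then have "G y x" using h symG by auto
      then have "F y (insert b B) \<noteq> F x (s x)" using assms(3) True h x False unfolding okF_def by auto
      then show ?thesis using True False by auto
    next
      case False2: False
      then show ?thesis using assms(1) False h x z unfolding cfree_def by auto
    qed
  qed
qed

lemma ld_upd:
  assumes "y \<in> L"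
  shows "ld (s(y := N)) t + card {e\<in>s y. tgt e = t} = ld s t + card {e\<in>N. tgt e = t}"
proof -
  have a: "ld (s(y := N)) t = card {e\<in>(s(y:=N)) y. tgt e = t} + (\<Sum>x\<in>L - {y}. card {e\<in>(s(y:=N)) x. tgt e = t})"
    unfolding ld_def by (rule sum.remove[OF finL assms])
  have b: "ld s t = card {e\<in>s y. tgt e = t} + (\<Sum>x\<in>L - {y}. card {e\<in>s x. tgt e = t})"
    unfolding ld_def by (rule sum.remove[OF finL assms])
  have c: "(\<Sum>x\<in>L - {y}. card {e\<in>(s(y:=N)) x. tgt e = t}) = (\<Sum>x\<in>L - {y}. card {e\<in>s x. tgt e = t})"
    by (rule sum.cong) auto
  have d: "card {e\<in>(s(y:=N)) y. tgt e = t} = card {e\<in>N. tgt e = t}" by simp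
  show ?thesis using a b c d by linarith
qed

lemma tot_upd:
  assumes "y \<in> L"
  shows "tot (s(y := N)) + card (s y) = tot s + card N"
proof -
  have a: "tot (s(y := N)) = card ((s(y:=N)) y) + (\<Sum>x\<in>L - {y}. card ((s(y:=N)) x))"
    unfolding tot_def by (rule sum.remove[OF finL assms])
  have b: "tot s = card (s y) + (\<Sum>x\<in>L - {y}. card (s x))"
    unfolding tot_def by (rule sum.remove[OF finL assms])
  have c: "(\<Sum>x\<in>L - {y}. card ((s(y:=N)) x)) = (\<Sum>x\<in>L - {y}. card (s x))"
    by (rule sum.cong) auto
  have d: "card ((s(y:=N)) y) = card N" by simp
  show ?thesis using a b c d by linarith
qed

lemma Reach_inv:
  assumes "(s,h) \<in> Reach ch u" "vld ch" "u \<in> L" "card (ch u) < 5"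
  shows "wfa s \<and> cfree s \<and> tot s = tot ch + 1 \<and> (\<forall>t. ld s t = ld ch t + (if t = h then 1 else 0))
     \<and> h \<in> Cap \<and> 4 \<le> ld ch h \<and> (\<forall>x. s x \<noteq> ch x \<longrightarrow> (\<exists>s0 B. ctx ch u s0 x B))"
  using assms(1)
proof induction
  case (start b)
  have wch: "wfa ch" "cfree ch" using assms(2) by (auto simp: vld_def)
  have fin: "finite (ch u)" using wch(1) assms(3) fincand by (meson finite_subset wfa_def)
  have bn: "b \<notin> ch u" "b \<in> cand u" using start by auto
  have cN: "card (insert b (ch u)) = card (ch u) + 1" using fin bn by simp
  have "wfa (ch(u := insert b (ch u)))"
    by (rule move_wf[OF wch(1) assms(3)]) (use bn cN assms(4) in auto)
  moreover have "cfree (ch(u := insert b (ch u)))"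
    by (rule move_cfree[OF wch(2) assms(3) start(2)])
  moreover have "tot (ch(u := insert b (ch u))) = tot ch + 1"
    using tot_upd[OF assms(3), of ch "insert b (ch u)"] cN by simp
  moreover have "\<forall>t. ld (ch(u := insert b (ch u))) t = ld ch t + (if t = tgt b then 1 else 0)"
  proof
    fix t
    show "ld (ch(u := insert b (ch u))) t = ld ch t + (if t = tgt b then 1 else 0)"
      using ld_upd[OF assms(3), of ch "insert b (ch u)" t] card_ins_filter[OF fin bn(1), of "\<lambda>e. tgt e = t"]
      by auto
  qed
  moreover have "\<forall>x. (ch(u := insert b (ch u))) x \<noteq> ch x \<longrightarrow> (\<exists>s0 B. ctx ch u s0 x B)"
    by (auto simp: ctx_def)
  ultimately show ?case using start by blast
next
  case (step s h y r b)
  have IH: "wfa s" "cfree s" "tot s = tot ch + 1" "\<forall>t. ld s t = ld ch t + (if t = h then 1 else 0)"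
    "\<forall>x. s x \<noteq> ch x \<longrightarrow> (\<exists>s0 B. ctx ch u s0 x B)" using step.IH by auto
  have fin: "finite (s y)" using IH(1) step.hyps(2) fincand by (meson finite_subset wfa_def)
  have bn: "b \<notin> s y" "b \<in> cand y" using step by auto
  have cN: "card (insert b (s y - {r})) = card (s y)"
    using fin bn step.hyps(3) by (simp add: card_Diff_singleton_if)
         (metis Suc_pred card_gt_0_iff empty_iff)
  have "wfa (s(y := insert b (s y - {r})))"
    by (rule move_wf[OF IH(1) step.hyps(2)]) (use bn cN IH(1) step.hyps(2) in \<open>auto simp: wfa_def\<close>)
  moreover have "cfree (s(y := insert b (s y - {r})))"
    by (rule move_cfree[OF IH(2) step.hyps(2) step.hyps(6)])
  moreover have "tot (s(y := insert b (s y - {r}))) = tot ch + 1"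
    using tot_upd[OF step.hyps(2), of s "insert b (s y - {r})"] cN IH(3) by simp
  moreover have "\<forall>t. ld (s(y := insert b (s y - {r}))) t = ld ch t + (if t = tgt b then 1 else 0)"
  proof
    fix t
    have e1: "ld (s(y := insert b (s y - {r}))) t + card {e\<in>s y. tgt e = t} = ld s t + card {e\<in>insert b (s y - {r}). tgt e = t}"
      by (rule ld_upd[OF step.hyps(2)])
    have e2: "card {e \<in> insert b (s y - {r}). tgt e = t} + (if tgt r = t then 1 else 0) = card {e\<in>s y. tgt e = t} + (if tgt b = t then 1 else 0)"
      by (rule card_swap_filter[OF fin step.hyps(3) bn(1)])
    have e3: "ld s t = ld ch t + (if t = h then 1 else 0)" using IH(4) by auto
    show "ld (s(y := insert b (s y - {r}))) t = ld ch t + (if t = tgt b then 1 else 0)"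
      using e1 e2 e3 step.hyps(4) by (auto split: if_splits)
  qed
  moreover have "\<forall>x. (s(y := insert b (s y - {r}))) x \<noteq> ch x \<longrightarrow> (\<exists>s0 B. ctx ch u s0 x B)"
  proof (intro allI impI)
    fix x assume x: "(s(y := insert b (s y - {r}))) x \<noteq> ch x"
    show "\<exists>s0 B. ctx ch u s0 x B"
    proof (cases "x = y")
      case True
      then show ?thesis unfolding ctx_def using step.hyps(1-4) by blast
    next
      case False
      then show ?thesis using x IH(5) by auto
    qed
  qed
  ultimately show ?case using step by blast
qed

lemma ctx_facts:
  assumes "ctx ch u s0 y B" "vld ch" "u \<in> L" "card (ch u) < 5"
  shows "wfa s0 \<and> cfree s0 \<and> y \<in> L \<and> B \<subseteq> s0 y \<and> card (s0 y) \<le> 5 \<and>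
    (\<forall>b. b \<in> cand y - s0 y \<longrightarrow> card (insert b B) \<le> 5 \<and> tot (s0(y := insert b B)) = tot ch + 1 \<and>
        (\<forall>t. ld (s0(y := insert b B)) t = ld ch t + (if t = tgt b then 1 else 0)))"
  using assms(1) unfolding ctx_def
proof (elim disjE exE conjE)
  assume e: "s0 = ch" "y = u" "B = ch u"
  have wch: "wfa ch" "cfree ch" using assms(2) by (auto simp: vld_def)
  have fin: "finite (ch u)" using wch(1) assms(3) fincand by (meson finite_subset wfa_def)
  have "\<forall>b. b \<in> cand u - ch u \<longrightarrow> card (insert b (ch u)) \<le> 5 \<and> tot (ch(u := insert b (ch u))) = tot ch + 1 \<and>
        (\<forall>t. ld (ch(u := insert b (ch u))) t = ld ch t + (if t = tgt b then 1 else 0))"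
  proof (intro allI impI conjI)
    fix b assume b: "b \<in> cand u - ch u"
    then have cN: "card (insert b (ch u)) = card (ch u) + 1" using fin by simp
    then show "card (insert b (ch u)) \<le> 5" using assms(4) by simp
    show "tot (ch(u := insert b (ch u))) = tot ch + 1"
      using tot_upd[OF assms(3), of ch "insert b (ch u)"] cN by simp
    fix t
    show "ld (ch(u := insert b (ch u))) t = ld ch t + (if t = tgt b then 1 else 0)"
      using ld_upd[OF assms(3), of ch "insert b (ch u)" t] card_ins_filter[OF fin, of b "\<lambda>e. tgt e = t"] b
      by auto
  qed
  then show ?thesis using e wch assms(3) wch(1) unfolding wfa_def by auto
next
  fix h r assume R: "(s0, h) \<in> Reach ch u" and y: "y \<in> L" and r: "r \<in> s0 y" "tgt r = h" and B: "B = s0 y - {r}"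
  note I = Reach_inv[OF R assms(2-4)]
  have fin: "finite (s0 y)" using I y fincand by (meson finite_subset wfa_def)
  have c5: "card (s0 y) \<le> 5" using I y by (auto simp: wfa_def)
  have "\<forall>b. b \<in> cand y - s0 y \<longrightarrow> card (insert b B) \<le> 5 \<and> tot (s0(y := insert b B)) = tot ch + 1 \<and>
        (\<forall>t. ld (s0(y := insert b B)) t = ld ch t + (if t = tgt b then 1 else 0))"
  proof (intro allI impI conjI)
    fix b assume b: "b \<in> cand y - s0 y"
    have cN: "card (insert b (s0 y - {r})) = card (s0 y)"
      using fin b r by (simp add: card_Diff_singleton_if) (metis Suc_pred card_gt_0_iff empty_iff)
    then show "card (insert b B) \<le> 5" using B c5 by simp
    show "tot (s0(y := insert b B)) = tot ch + 1"
      using tot_upd[OF y, of s0 "insert b B"] cN B I by simp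
    fix t
    have e1: "ld (s0(y := insert b B)) t + card {e\<in>s0 y. tgt e = t} = ld s0 t + card {e\<in>insert b B. tgt e = t}"
      by (rule ld_upd[OF y])
    have e2: "card {e \<in> insert b (s0 y - {r}). tgt e = t} + (if tgt r = t then 1 else 0) = card {e\<in>s0 y. tgt e = t} + (if tgt b = t then 1 else 0)"
      by (rule card_swap_filter[OF fin r(1)]) (use b in simp)
    have e3: "ld s0 t = ld ch t + (if t = h then 1 else 0)" using I by auto
    show "ld (s0(y := insert b B)) t = ld ch t + (if t = tgt b then 1 else 0)"
      using e1 e2 e3 r(2) B by (auto split: if_splits)
  qed
  then show ?thesis using I y B c5 by auto
qed

lemma aug:
  assumes V: "vld ch" and u: "u \<in> L" and cu: "card (ch u) < 5"
  shows "\<exists>s. vld s \<and> tot s = tot ch + 1"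
proof (rule ccontr)
  assume nos: "\<not> (\<exists>s. vld s \<and> tot s = tot ch + 1)"
  define T where "T = snd ` Reach ch u"
  define R where "R = {y\<in>L. \<exists>s0 B. ctx ch u s0 y B}"
  have wch: "wfa ch" "cfree ch" "\<forall>t\<in>Cap. ld ch t \<le> 4" using V by (auto simp: vld_def)
  have key: "tgt b \<in> T" if c: "ctx ch u s0 y B" and b: "b \<in> cand y - s0 y" and ok: "okF s0 y B b" for s0 y B b
  proof -
    note C = ctx_facts[OF c V u cu]
    let ?s = "s0(y := insert b B)"
    show ?thesis
    proof (cases "tgt b \<in> Cap \<and> 4 \<le> ld ch (tgt b)")
      case True
      have "(?s, tgt b) \<in> Reach ch u"
        using c unfolding ctx_def
      proof (elim disjE exE conjE)
        assume "s0 = ch" "y = u" "B = ch u"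
        then show ?thesis using b ok True by (auto intro: Reach.start)
      next
        fix h r assume "(s0, h) \<in> Reach ch u" "y \<in> L" "r \<in> s0 y" "tgt r = h" "B = s0 y - {r}"
        then show ?thesis using b ok True by (auto intro: Reach.step)
      qed
      then show ?thesis unfolding T_def by force
    next
      case False
      have "wfa ?s" by (rule move_wf) (use C b in auto)
      moreover have "cfree ?s" by (rule move_cfree) (use C ok in auto)
      moreover have "\<forall>t\<in>Cap. ld ?s t \<le> 4"
      proof
        fix t assume t: "t \<in> Cap"
        have "ld ?s t = ld ch t + (if t = tgt b then 1 else 0)" using C b by blast
        then show "ld ?s t \<le> 4" using False t wch(3) by (auto split: if_splits)
      qed
      moreover have "tot ?s = tot ch + 1" using C b by blast
      ultimately show ?thesis using nos unfolding vld_def by blast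
    qed
  qed
  have count: "real (card (cand y)) \<le> real (card {b\<in>cand y. tgt b \<in> T}) + 5 + gr" if c: "ctx ch u s0 y B" for s0 y B
  proof -
    note C = ctx_facts[OF c V u cu]
    have y: "y \<in> L" using C by blast
    define Nb where "Nb = {z\<in>L. G y z \<and> z \<noteq> y}"
    define Fb where "Fb = (\<Union>z\<in>Nb. {b\<in>cand y - s0 y. F y (insert b B) = F z (s0 z)})"
    have sub: "cand y \<subseteq> {b\<in>cand y. tgt b \<in> T} \<union> s0 y \<union> Fb"
    proof
      fix b assume b: "b \<in> cand y"
      show "b \<in> {b\<in>cand y. tgt b \<in> T} \<union> s0 y \<union> Fb"
      proof (cases "b \<in> s0 y \<or> b \<in> Fb")
        case True then show ?thesis by auto
      next
        case False
        have "okF s0 y B b" unfolding okF_def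
        proof (intro impI ballI)
          fix z assume "z \<in> L" "G y z \<and> z \<noteq> y \<and> card (s0 z) = 5"
          then have "z \<in> Nb" unfolding Nb_def by auto
          then show "F y (insert b B) \<noteq> F z (s0 z)" using False b unfolding Fb_def by auto
        qed
        then have "tgt b \<in> T" using key[OF c] b False by auto
        then show ?thesis using b by auto
      qed
    qed
    have finc: "finite (cand y)" using fincand y by auto
    have finNb: "finite Nb" unfolding Nb_def using finL by auto
    have one: "card {b\<in>cand y - s0 y. F y (insert b B) = F z (s0 z)} \<le> 1" for z
    proof -
      have fz: "finite {b\<in>cand y - s0 y. F y (insert b B) = F z (s0 z)}" using finc by auto
      have "\<forall>b\<in>{b\<in>cand y - s0 y. F y (insert b B) = F z (s0 z)}. \<forall>b'\<in>{b\<in>cand y - s0 y. F y (insert b B) = F z (s0 z)}. b = b'"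
      proof (intro ballI)
        fix b b' assume b: "b \<in> {b\<in>cand y - s0 y. F y (insert b B) = F z (s0 z)}"
          and b': "b' \<in> {b\<in>cand y - s0 y. F y (insert b B) = F z (s0 z)}"
        have Bs: "B \<subseteq> s0 y" using C by blast
        show "b = b'"
          by (rule Finj[OF y, of b b' B]) (use b b' Bs in auto)
      qed
      then show ?thesis using card_le_Suc0_iff_eq[OF fz] by simp
    qed
    have "card Fb \<le> (\<Sum>z\<in>Nb. card {b\<in>cand y - s0 y. F y (insert b B) = F z (s0 z)})"
      unfolding Fb_def by (rule card_UN_le[OF finNb])
    also have "\<dots> \<le> (\<Sum>z\<in>Nb. 1)" by (rule sum_mono) (rule one)
    also have "\<dots> = card Nb" by simp
    finally have cFb: "card Fb \<le> card Nb" .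
    have "card (cand y) \<le> card ({b\<in>cand y. tgt b \<in> T} \<union> s0 y \<union> Fb)"
      by (rule card_mono[OF _ sub]) (use finc C y fincand in \<open>auto simp: Fb_def wfa_def intro: finite_subset\<close>)
    also have "\<dots> \<le> card {b\<in>cand y. tgt b \<in> T} + card (s0 y) + card Fb"
      by (metis (no_types, lifting) add_le_mono card_Un_le le_trans order_refl)
    finally have "card (cand y) \<le> card {b\<in>cand y. tgt b \<in> T} + 5 + card Nb" using C cFb by linarith
    moreover have "real (card Nb) \<le> gr" unfolding Nb_def using gbound[OF y] .
    ultimately show ?thesis by linarith
  qed
  have Tfacts: "t \<in> Cap \<and> ld ch t = 4" if tT: "t \<in> T" for t
  proof -
    obtain s where "(s, t) \<in> Reach ch u" using tT unfolding T_def by force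
    from Reach_inv[OF this V u cu] show ?thesis using wch(3) by fastforce
  qed
  have finT: "finite T"
  proof (rule finite_subset)
    show "T \<subseteq> tgt ` (\<Union>x\<in>L. ch x)"
    proof
      fix t assume t: "t \<in> T"
      then have "0 < ld ch t" using Tfacts by auto
      then obtain x where "x \<in> L" "card {e\<in>ch x. tgt e = t} \<noteq> 0" unfolding ld_def
        by (metis (no_types, lifting) not_gr0 sum.neutral)
      then obtain e where "x \<in> L" "e \<in> ch x" "tgt e = t" by (metis (mono_tags, lifting) Collect_empty_eq card.empty)
      then show "t \<in> tgt ` (\<Union>x\<in>L. ch x)" by auto
    qed
    have "\<forall>x\<in>L. finite (ch x)" using wch(1) fincand by (meson finite_subset wfa_def)
    then show "finite (tgt ` (\<Union>x\<in>L. ch x))" using finL by auto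
  qed
  have finch: "finite (ch x)" if xL: "x \<in> L" for x using wch(1) fincand xL by (meson finite_subset wfa_def)
  have claimB: "x \<in> R" if x: "x \<in> L" and e: "e \<in> ch x" and t: "tgt e \<in> T" for x e
  proof -
    obtain s where sR: "(s, tgt e) \<in> Reach ch u" using t unfolding T_def by force
    show ?thesis
    proof (cases "e \<in> s x")
      case True
      then have "ctx ch u s x (s x - {e})" unfolding ctx_def using sR x by blast
      then show ?thesis using x unfolding R_def by blast
    next
      case False
      then have "s x \<noteq> ch x" using e by auto
      then show ?thesis using Reach_inv[OF sR V u cu] x unfolding R_def by blast
    qed
  qed
  have RL: "R \<subseteq> L" unfolding R_def by auto
  have finR: "finite R" using RL finL finite_subset by auto
  have uR: "u \<in> R" unfolding R_def ctx_def using u by blast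
  have s1: "4 * card T \<le> 5 * card R"
  proof -
    have "4 * card T = (\<Sum>t\<in>T. ld ch t)" using Tfacts by simp
    also have "\<dots> = (\<Sum>t\<in>T. \<Sum>x\<in>L. card {e\<in>ch x. tgt e = t})" unfolding ld_def by simp
    also have "\<dots> = (\<Sum>x\<in>L. \<Sum>t\<in>T. card {e\<in>ch x. tgt e = t})" by (rule sum.swap)
    also have "\<dots> = (\<Sum>x\<in>L. card {e\<in>ch x. tgt e \<in> T})"
      by (rule sum.cong) (auto intro: fib_card finch finT)
    also have "\<dots> \<le> (\<Sum>x\<in>L. if x \<in> R then 5 else 0)"
    proof (rule sum_mono)
      fix x assume x: "x \<in> L"
      show "card {e\<in>ch x. tgt e \<in> T} \<le> (if x \<in> R then 5 else 0)"
      proof (cases "x \<in> R")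
        case True
        have "card {e\<in>ch x. tgt e \<in> T} \<le> card (ch x)" by (rule card_mono) (auto intro: finch x)
        also have "\<dots> \<le> 5" using wch(1) x by (auto simp: wfa_def)
        finally show ?thesis using True by simp
      next
        case False
        have E: "{e\<in>ch x. tgt e \<in> T} = {}" using claimB x False by auto
        show ?thesis using False by (simp only: E card.empty if_False)
      qed
    qed
    also have "\<dots> = (\<Sum>x\<in>L \<inter> R. 5)" by (rule sum.inter_restrict[OF finL, symmetric])
    also have "\<dots> = 5 * card R" using RL by (simp add: Int_absorb1)
    finally show ?thesis .
  qed
  have s2: "real (card R) * (cr - 5 - gr) \<le> real (card T) * Dr"
  proof -
    have "real (card R) * (cr - 5 - gr) = (\<Sum>y\<in>R. cr - 5 - gr)" by simp
    also have "\<dots> \<le> (\<Sum>y\<in>R. real (card {b\<in>cand y. tgt b \<in> T}))"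
    proof (rule sum_mono)
      fix y assume y: "y \<in> R"
      then obtain s0 B where c: "ctx ch u s0 y B" unfolding R_def by blast
      show "cr - 5 - gr \<le> real (card {b\<in>cand y. tgt b \<in> T})" using count[OF c] cbound[of y] y RL by auto
    qed
    also have "\<dots> \<le> (\<Sum>y\<in>L. real (card {b\<in>cand y. tgt b \<in> T}))"
      by (rule sum_mono2[OF finL RL]) auto
    also have "\<dots> = (\<Sum>y\<in>L. \<Sum>t\<in>T. real (card {b\<in>cand y. tgt b = t}))"
      by (rule sum.cong) (auto simp flip: of_nat_sum intro!: arg_cong[where f=real] fib_card[symmetric] fincand finT)
    also have "\<dots> = (\<Sum>t\<in>T. \<Sum>y\<in>L. real (card {b\<in>cand y. tgt b = t}))" by (rule sum.swap)
    also have "\<dots> \<le> (\<Sum>t\<in>T. Dr)"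
    proof (rule sum_mono)
      fix t assume "t \<in> T"
      then show "(\<Sum>y\<in>L. real (card {b\<in>cand y. tgt b = t})) \<le> Dr" using Dbound Tfacts by (auto simp flip: of_nat_sum)
    qed
    also have "\<dots> = real (card T) * Dr" by simp
    finally show ?thesis .
  qed
  have Rpos: "0 < real (card R)" using uR finR card_gt_0_iff by auto
  have "4 * real (card T) \<le> 5 * real (card R)" using s1 by linarith
  then have "4 * real (card T) * Dr \<le> 5 * real (card R) * Dr" using Dnn by (rule mult_right_mono)
  with s2 have "real (card R) * (4 * (cr - 5 - gr)) \<le> real (card R) * (5 * Dr)" by (simp add: algebra_simps)
  then have "4 * (cr - 5 - gr) \<le> 5 * Dr" using Rpos by simp
  then show False using num by simp
qed

lemma exists_full:
  "\<exists>s. (\<forall>x\<in>L. s x \<subseteq> cand x \<and> card (s x) = 5) \<and> (\<forall>x. x \<notin> L \<longrightarrow> s x = {}) \<and> (\<forall>t\<in>Cap. ld s t \<le> 4)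
      \<and> (\<forall>x\<in>L. \<forall>y\<in>L. G x y \<and> x \<noteq> y \<longrightarrow> F x (s x) \<noteq> F y (s y))"
proof -
  have totle: "tot s \<le> 5 * card L" if "wfa s" for s
  proof -
    have "tot s \<le> (\<Sum>x\<in>L. 5)" unfolding tot_def by (rule sum_mono) (use that in \<open>auto simp: wfa_def\<close>)
    then show ?thesis by simp
  qed
  have ind: "k \<le> 5 * card L \<longrightarrow> (\<exists>s. vld s \<and> tot s = k)" for k
  proof (induction k)
    case 0
    have "vld (\<lambda>_. {})" by (auto simp: vld_def wfa_def cfree_def ld_def)
    moreover have "tot (\<lambda>_. {}) = 0" by (simp add: tot_def)
    ultimately show ?case by blast
  next
    case (Suc k)
    show ?case
    proof
      assume k: "Suc k \<le> 5 * card L"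
      then obtain s where s: "vld s" "tot s = k" using Suc by auto
      have "\<exists>u\<in>L. card (s u) < 5"
      proof (rule ccontr)
        assume "\<not> (\<exists>u\<in>L. card (s u) < 5)"
        then have "\<forall>u\<in>L. card (s u) = 5" using s(1) by (force simp: vld_def wfa_def)
        then have "tot s = 5 * card L" unfolding tot_def by simp
        then show False using s k by simp
      qed
      then obtain u where "u \<in> L" "card (s u) < 5" by blast
      from aug[OF s(1) this] obtain s' where "vld s'" "tot s' = tot s + 1" by blast
      then show "\<exists>s. vld s \<and> tot s = Suc k" using s by auto
    qed
  qed
  obtain s where s: "vld s" "tot s = 5 * card L" using ind by blast
  have all5: "\<forall>x\<in>L. card (s x) = 5"
  proof (rule ccontr)
    assume "\<not> (\<forall>x\<in>L. card (s x) = 5)"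
    then obtain x where x: "x \<in> L" "card (s x) \<noteq> 5" by blast
    have le: "\<forall>x\<in>L. card (s x) \<le> 5" using s(1) by (auto simp: vld_def wfa_def)
    have x5: "card (s x) < 5" using le x by force
    have "tot s < (\<Sum>x\<in>L. 5)" unfolding tot_def
      by (rule sum_strict_mono_ex1[OF finL]) (use le x5 x(1) in auto)
    then show False using s(2) by simp
  qed
  show ?thesis
    apply (rule exI[of _ s])
    using s(1) all5 unfolding vld_def wfa_def cfree_def by auto
qed

end

lemma two_ends:
  assumes "card (S::'v set) = 2" "a \<in> S" "b \<in> S" "a \<noteq> b"
  shows "S = {a, b}"
proof -
  have fin: "finite S" using assms(1) card.infinite by fastforce
  have "{a, b} \<subseteq> S" using assms by auto
  moreover have "card {a, b} = card S" using assms by simp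
  ultimately show ?thesis using card_subset_eq[OF fin] by blast
qed

lemma symdiff_ne:
  assumes "finite Ru" "finite Rv" "S2u \<subseteq> S1u" "S1u - Ru \<subseteq> S2u" "S2v \<subseteq> S1v" "S1v - Rv \<subseteq> S2v"
    "card Ru + card Rv \<le> 9" "10 \<le> card (S1u - S1v \<union> (S1v - S1u))"
  shows "S2u \<noteq> S2v"
proof
  assume eq: "S2u = S2v"
  have "S1u - S1v \<union> (S1v - S1u) \<subseteq> Ru \<union> Rv" using assms(3-6) eq by blast
  then have "card (S1u - S1v \<union> (S1v - S1u)) \<le> card (Ru \<union> Rv)"
    using assms(1,2) by (intro card_mono) auto
  also have "\<dots> \<le> card Ru + card Rv" by (rule card_Un_le)
  finally show False using assms(7,8) by simp
qed

lemma phase1_cases: "phase1 U ends \<sigma> e = None \<or> phase1 U ends \<sigma> e = Some (\<sigma> e)"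
  by (simp add: phase1_def)

theorem lemma5:
  fixes V :: "'v set" and E :: "'e set" and ends :: "'e \<Rightarrow> 'v set"
    and \<sigma> :: "'e \<Rightarrow> 'c" and U :: "'e set"
  assumes G: "multigraph2 V E ends"
    and Delta: "real (maxdeg V E ends) > 10 ^ 20"
    and H_simple: "\<forall>e\<in>HE V E ends. \<forall>f\<in>HE V E ends. ends e = ends f \<longrightarrow> e = f"
    and proper: "proper_edge_coloring E ends \<sigma>"
    and U: "U \<subseteq> E - HE V E ends"
    and hypa: "\<forall>v\<in>V - HV V E ends.
        real (card (nbhd E ends v \<inter> Lset V E ends (phase1 U ends \<sigma>)))
          \<le> real (maxdeg V E ends) / 100"
    and hypb: "\<forall>u\<in>V - HV V E ends. \<forall>v\<in>V - HV V E ends.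
        adjacent E ends u v \<and> deg E ends u = deg E ends v
        \<and> u \<notin> Lset V E ends (phase1 U ends \<sigma>) \<longrightarrow>
        card (Scol E ends (phase1 U ends \<sigma>) u - Scol E ends (phase1 U ends \<sigma>) v
              \<union> (Scol E ends (phase1 U ends \<sigma>) v - Scol E ends (phase1 U ends \<sigma>) u)) \<ge> 10"
  shows "measure_pmf.prob (phase2_dist V E ends (phase1 U ends \<sigma>))
     {ch. (\<forall>v\<in>V - HV V E ends - Lset V E ends (phase1 U ends \<sigma>).
              card (UC2 V E ends (phase1 U ends \<sigma>) ch v) \<le> 4)
        \<and> (\<forall>u\<in>V - HV V E ends. \<forall>v\<in>V - HV V E ends.
              adjacent E ends u v \<and> deg E ends u = deg E ends v \<longrightarrow>
              Scol E ends (phase2 V E ends (phase1 U ends \<sigma>) ch) u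
                \<noteq> Scol E ends (phase2 V E ends (phase1 U ends \<sigma>) ch) v)} > 0"
proof -
  define c1 where "c1 = phase1 U ends \<sigma>"
  define Lv where "Lv = Lset V E ends c1"
  define HVs where "HVs = HV V E ends"
  define D where "D = real (maxdeg V E ends)"
  define cd where "cd = cand V E ends c1"
  define tg where "tg = (\<lambda>e. SOME w. w \<in> ends e \<and> w \<notin> Lv)"
  define Cp where "Cp = V - HVs - Lv"
  define Gm where "Gm = (\<lambda>u v. adjacent E ends u v \<and> deg E ends u = deg E ends v)"
  define Fm where "Fm = (\<lambda>u C. {col. \<exists>e\<in>E. u \<in> ends e \<and> e \<notin> C \<and> c1 e = Some col})"
  have finV: "finite V" and finE: "finite E" and endsE: "\<And>e. e \<in> E \<Longrightarrow> ends e \<subseteq> V \<and> card (ends e) = 2"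
    and mult: "\<And>u v. card {e\<in>E. ends e = {u, v}} \<le> 2"
    using G unfolding multigraph2_def by auto
  have hypa': "\<And>v. v \<in> V - HVs \<Longrightarrow> real (card (nbhd E ends v \<inter> Lv)) \<le> D / 100"
    using hypa unfolding c1_def Lv_def HVs_def D_def by blast
  have LvV: "Lv \<subseteq> V - HVs" unfolding Lv_def Lset_def HVs_def by auto
  have finLv: "finite Lv" using LvV finV finite_subset by blast
  have c1S: "\<And>e. c1 e \<noteq> None \<Longrightarrow> c1 e = Some (\<sigma> e)" using phase1_cases unfolding c1_def by metis
  have cd_iff: "\<And>u e. e \<in> cd u \<longleftrightarrow> e \<in> E \<and> u \<in> ends e \<and> c1 e \<noteq> None \<and> (\<forall>w\<in>ends e. w \<noteq> u \<longrightarrow> w \<notin> Lv)"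
    unfolding cd_def cand_def Lv_def by auto
  have tgf: "ends e = {u, tg e} \<and> tg e \<notin> Lv \<and> tg e \<noteq> u" if u: "u \<in> Lv" and e: "e \<in> cd u" for u e
  proof -
    have eE: "e \<in> E" "u \<in> ends e" and nl: "\<forall>w\<in>ends e. w \<noteq> u \<longrightarrow> w \<notin> Lv" using e cd_iff by auto
    obtain w where w: "w \<in> ends e" "w \<noteq> u"
      using endsE[OF eE(1)] eE(2) by (metis card_2_iff insertCI)
    have ex: "\<exists>w. w \<in> ends e \<and> w \<notin> Lv" using w nl by blast
    have t: "tg e \<in> ends e" "tg e \<notin> Lv" unfolding tg_def using someI_ex[OF ex] by auto
    have "tg e \<noteq> u" using t u by auto
    then show ?thesis using two_ends[of "ends e" u "tg e"] endsE[OF eE(1)] eE(2) t by auto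
  qed
  have adj_sym: "\<And>u v. adjacent E ends u v \<Longrightarrow> adjacent E ends v u"
    unfolding adjacent_def by (metis insert_commute)
  have adj_ne: "\<And>u v. adjacent E ends u v \<Longrightarrow> u \<noteq> v"
    unfolding adjacent_def using endsE by fastforce
  have finN: "\<And>v. finite (nbhd E ends v \<inter> Lv)" using finLv by auto
  have degx: "D / 3 \<le> real (deg E ends x)" if "x \<in> V - HVs" for x
    using that unfolding HVs_def HV_def D_def by auto
  have num: "5 * (D / 50) < 4 * ((D / 3 - 19 - D / 50) - 5 - D / 100)"
    using Delta unfolding D_def by simp
  interpret A: augm Lv cd tg Cp Gm Fm "D / 3 - 19 - D / 50" "D / 100" "D / 50"
  proof (unfold_locales)
    show "finite Lv" by (rule finLv)
    show "\<And>x. x \<in> Lv \<Longrightarrow> finite (cd x)" using finE cd_iff by (metis finite_subset subsetI)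
    show "\<And>x y. Gm x y \<Longrightarrow> Gm y x" unfolding Gm_def using adj_sym by auto
    show "\<And>x. x \<in> Lv \<Longrightarrow> real (card {y\<in>Lv. Gm x y \<and> y \<noteq> x}) \<le> D / 100"
    proof -
      fix x assume x: "x \<in> Lv"
      have "card {y\<in>Lv. Gm x y \<and> y \<noteq> x} \<le> card (nbhd E ends x \<inter> Lv)"
        by (rule card_mono[OF finN]) (auto simp: Gm_def nbhd_def)
      then show "real (card {y\<in>Lv. Gm x y \<and> y \<noteq> x}) \<le> D / 100" using hypa'[of x] x LvV by force
    qed
    show "\<And>t. t \<in> Cp \<Longrightarrow> real (\<Sum>x\<in>Lv. card {e\<in>cd x. tg e = t}) \<le> D / 50"
    proof -
      fix t assume t: "t \<in> Cp"
      have le: "card {e\<in>cd x. tg e = t} \<le> (if x \<in> nbhd E ends t then 2 else 0)" if x: "x \<in> Lv" for x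
      proof -
        have sub: "{e\<in>cd x. tg e = t} \<subseteq> {e\<in>E. ends e = {t, x}}"
          using tgf[OF x] cd_iff by (auto simp: insert_commute)
        show ?thesis
        proof (cases "x \<in> nbhd E ends t")
          case True
          have "card {e\<in>cd x. tg e = t} \<le> card {e\<in>E. ends e = {t, x}}"
            by (rule card_mono[OF _ sub]) (use finE in auto)
          then show ?thesis using mult[of t x] True by simp
        next
          case False
          have "{e\<in>E. ends e = {t, x}} = {}" using False unfolding nbhd_def adjacent_def by auto
          then have E0: "{e\<in>cd x. tg e = t} = {}" using sub by blast
          show ?thesis using False by (simp only: E0 card.empty if_False)
        qed
      qed
      have "(\<Sum>x\<in>Lv. card {e\<in>cd x. tg e = t}) \<le> (\<Sum>x\<in>Lv. if x \<in> nbhd E ends t then 2 else 0)"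
        by (rule sum_mono) (rule le)
      also have "\<dots> = (\<Sum>x\<in>Lv \<inter> nbhd E ends t. 2)" by (rule sum.inter_restrict[OF finLv, symmetric])
      also have "\<dots> = 2 * card (nbhd E ends t \<inter> Lv)" by (simp add: Int_commute)
      finally have "real (\<Sum>x\<in>Lv. card {e\<in>cd x. tg e = t}) \<le> 2 * real (card (nbhd E ends t \<inter> Lv))"
        by linarith
      moreover have "real (card (nbhd E ends t \<inter> Lv)) \<le> D / 100" using hypa'[of t] t unfolding Cp_def by auto
      ultimately show "real (\<Sum>x\<in>Lv. card {e\<in>cd x. tg e = t}) \<le> D / 50" by linarith
    qed
    show "\<And>x. x \<in> Lv \<Longrightarrow> D / 3 - 19 - D / 50 \<le> real (card (cd x))"
    proof -
      fix x assume x: "x \<in> Lv"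
      define A0 where "A0 = {e\<in>E. x \<in> ends e}"
      define U0 where "U0 = {e\<in>E. x \<in> ends e \<and> c1 e = None}"
      define W where "W = (\<Union>w\<in>nbhd E ends x \<inter> Lv. {e\<in>E. ends e = {x, w}})"
      have cU0: "card U0 < 20" using x unfolding U0_def Lv_def Lset_def by auto
      have sub: "A0 \<subseteq> cd x \<union> U0 \<union> W"
      proof
        fix e assume e: "e \<in> A0"
        show "e \<in> cd x \<union> U0 \<union> W"
        proof (cases "c1 e = None")
          case True then show ?thesis using e unfolding U0_def A0_def by auto
        next
          case False
          show ?thesis
          proof (cases "\<forall>w\<in>ends e. w \<noteq> x \<longrightarrow> w \<notin> Lv")
            case True then show ?thesis using e False cd_iff unfolding A0_def by auto
          next
            case nT: False
            then obtain w where w: "w \<in> ends e" "w \<noteq> x" "w \<in> Lv" by blast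
            have eE: "e \<in> E" "x \<in> ends e" using e unfolding A0_def by auto
            have "ends e = {x, w}" using two_ends[of "ends e" x w] endsE[OF eE(1)] eE(2) w by auto
            then have "w \<in> nbhd E ends x" unfolding nbhd_def adjacent_def using eE by auto
            then show ?thesis unfolding W_def using w eE \<open>ends e = {x, w}\<close> by auto
          qed
        qed
      qed
      have finc: "finite (cd x)" using finE cd_iff by (metis finite_subset subsetI)
      have "card W \<le> (\<Sum>w\<in>nbhd E ends x \<inter> Lv. card {e\<in>E. ends e = {x, w}})"
        unfolding W_def by (rule card_UN_le[OF finN])
      also have "\<dots> \<le> (\<Sum>w\<in>nbhd E ends x \<inter> Lv. 2)" by (rule sum_mono) (rule mult)
      finally have cW: "card W \<le> 2 * card (nbhd E ends x \<inter> Lv)" by simp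
      have "card A0 \<le> card (cd x \<union> U0 \<union> W)"
        by (rule card_mono[OF _ sub]) (use finc finE finN in \<open>auto simp: U0_def W_def\<close>)
      also have "\<dots> \<le> card (cd x) + card U0 + card W"
        by (metis (no_types, lifting) add_le_mono card_Un_le le_trans order_refl)
      finally have "card A0 \<le> card (cd x) + card U0 + card W" .
      moreover have "deg E ends x = card A0" unfolding deg_def A0_def by simp
      moreover have "D / 3 \<le> real (deg E ends x)" using degx x LvV by auto
      moreover have "real (card (nbhd E ends x \<inter> Lv)) \<le> D / 100" using hypa'[of x] x LvV by auto
      ultimately show "D / 3 - 19 - D / 50 \<le> real (card (cd x))" using cU0 cW by linarith
    qed
    show "\<And>x b b' B. x \<in> Lv \<Longrightarrow> b \<in> cd x \<Longrightarrow> b' \<in> cd x \<Longrightarrow> b \<notin> B \<Longrightarrow> b' \<notin> B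
                 \<Longrightarrow> Fm x (insert b B) = Fm x (insert b' B) \<Longrightarrow> b = b'"
    proof (rule ccontr)
      fix x b b' B assume x: "x \<in> Lv" and b: "b \<in> cd x" and b': "b' \<in> cd x" and bB: "b \<notin> B" and b'B: "b' \<notin> B"
        and eq: "Fm x (insert b B) = Fm x (insert b' B)" and ne: "b \<noteq> b'"
      have bE: "b \<in> E" "x \<in> ends b" "c1 b = Some (\<sigma> b)" using b cd_iff c1S by auto
      have "\<sigma> b \<in> Fm x (insert b' B)" unfolding Fm_def using bE ne bB by auto
      moreover have "\<sigma> b \<notin> Fm x (insert b B)"
      proof
        assume "\<sigma> b \<in> Fm x (insert b B)"
        then obtain e where e: "e \<in> E" "x \<in> ends e" "e \<notin> insert b B" "c1 e = Some (\<sigma> b)" unfolding Fm_def by auto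
        have "c1 e = Some (\<sigma> e)" using c1S e(4) by auto
        then have "\<sigma> e = \<sigma> b" using e(4) by simp
        moreover have "\<sigma> e \<noteq> \<sigma> b"
        proof -
          have ne2: "e \<noteq> b" using e(3) by auto
          have ie: "ends e \<inter> ends b \<noteq> {}" using e(2) bE(2) by auto
          show ?thesis using proper e(1) bE(1) ne2 ie unfolding proper_edge_coloring_def by blast
        qed
        ultimately show False by simp
      qed
      ultimately show False using eq by simp
    qed
    show "0 \<le> D / 50" unfolding D_def by simp
    show "5 * (D / 50) < 4 * (D / 3 - 19 - D / 50 - 5 - D / 100)" using num by simp
  qed
  from A.exists_full obtain s where S: "(\<forall>x\<in>Lv. s x \<subseteq> cd x \<and> card (s x) = 5) \<and> (\<forall>x. x \<notin> Lv \<longrightarrow> s x = {}) \<and> (\<forall>t\<in>Cp. A.ld s t \<le> 4)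
      \<and> (\<forall>x\<in>Lv. \<forall>y\<in>Lv. Gm x y \<and> x \<noteq> y \<longrightarrow> Fm x (s x) \<noteq> Fm y (s y))" ..
  have s1: "\<forall>x\<in>Lv. s x \<subseteq> cd x \<and> card (s x) = 5" using S by (rule conjunct1)
  have s2: "\<forall>x. x \<notin> Lv \<longrightarrow> s x = {}" using S by (elim conjE)
  have s3: "\<forall>t\<in>Cp. A.ld s t \<le> 4" using S by (elim conjE)
  have s4: "\<forall>x\<in>Lv. \<forall>y\<in>Lv. Gm x y \<and> x \<noteq> y \<longrightarrow> Fm x (s x) \<noteq> Fm y (s y)" using S by (elim conjE)
  define c2 where "c2 = phase2 V E ends c1 s"
  define UC where "UC = UC2 V E ends c1 s"
  have UC_iff: "\<And>x e. e \<in> UC x \<longleftrightarrow> e \<in> E \<and> x \<in> ends e \<and> (\<exists>w\<in>Lv. e \<in> s w)"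
    unfolding UC_def UC2_def Lv_def by auto
  have finUC: "\<And>x. finite (UC x)" using finE UC_iff by (metis finite_subset subsetI)
  have UC_L: "UC x \<subseteq> s x" if x: "x \<in> Lv" for x
  proof
    fix e assume "e \<in> UC x"
    then obtain w where w: "w \<in> Lv" "e \<in> s w" "x \<in> ends e" using UC_iff by auto
    then have "e \<in> cd w" using s1 by auto
    then have "x = w" using cd_iff w x by blast
    then show "e \<in> s x" using w by simp
  qed
  have UC_C: "card (UC v) \<le> 4" if v: "v \<in> Cp" for v
  proof -
    have vL: "v \<notin> Lv" using v unfolding Cp_def by auto
    have "UC v \<subseteq> (\<Union>x\<in>Lv. {e\<in>s x. tg e = v})"
    proof
      fix e assume "e \<in> UC v"
      then obtain w where w: "w \<in> Lv" "e \<in> s w" "v \<in> ends e" using UC_iff by auto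
      then have ecd: "e \<in> cd w" using s1 by auto
      have "ends e = {w, tg e}" using tgf[OF w(1) ecd] by auto
      then have "tg e = v" using w(3) vL w(1) by auto
      then show "e \<in> (\<Union>x\<in>Lv. {e\<in>s x. tg e = v})" using w by auto
    qed
    then have "card (UC v) \<le> card (\<Union>x\<in>Lv. {e\<in>s x. tg e = v})"
      by (rule card_mono[rotated]) (use finLv s1 A.fincand in \<open>auto intro: finite_subset\<close>)
    also have "\<dots> \<le> (\<Sum>x\<in>Lv. card {e\<in>s x. tg e = v})" by (rule card_UN_le[OF finLv])
    also have "\<dots> = A.ld s v" unfolding A.ld_def by simp
    finally show ?thesis using s3 v by auto
  qed
  have c2_iff: "\<And>e. c2 e = (if \<exists>u\<in>Lv. e \<in> s u then None else c1 e)"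
    unfolding c2_def phase2_def Lv_def by simp
  have Ssub: "Scol E ends c2 x \<subseteq> Scol E ends c1 x" for x
    unfolding Scol_def using c2_iff by (auto split: if_splits)
  define Rm where "Rm = (\<lambda>x. {col. \<exists>e\<in>UC x. c1 e = Some col})"
  have Rsub: "Scol E ends c1 x - Rm x \<subseteq> Scol E ends c2 x" for x
  proof
    fix col assume "col \<in> Scol E ends c1 x - Rm x"
    then obtain e where e: "e \<in> E" "x \<in> ends e" "c1 e = Some col" and nR: "col \<notin> Rm x" unfolding Scol_def by auto
    have "e \<notin> UC x" using nR e unfolding Rm_def by auto
    then have "\<not> (\<exists>u\<in>Lv. e \<in> s u)" using UC_iff e by auto
    then have "c2 e = Some col" using c2_iff e by simp
    then show "col \<in> Scol E ends c2 x" unfolding Scol_def using e by auto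
  qed
  have Rcard: "card (Rm x) \<le> card (UC x)" and finR: "finite (Rm x)" for x
  proof -
    have sub: "Rm x \<subseteq> (\<lambda>e. the (c1 e)) ` UC x" unfolding Rm_def by force
    moreover have fi: "finite ((\<lambda>e. the (c1 e)) ` UC x)" using finUC by simp
    ultimately show "finite (Rm x)" using finite_subset by blast
    have "card (Rm x) \<le> card ((\<lambda>e. the (c1 e)) ` UC x)" by (rule card_mono[OF fi sub])
    also have "\<dots> \<le> card (UC x)" by (rule card_image_le[OF finUC])
    finally show "card (Rm x) \<le> card (UC x)" .
  qed
  have SL: "Scol E ends c2 x = Fm x (s x)" if x: "x \<in> Lv" for x
  proof -
    have "\<And>e. e \<in> E \<Longrightarrow> x \<in> ends e \<Longrightarrow> (\<exists>u\<in>Lv. e \<in> s u) \<longleftrightarrow> e \<in> s x"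
      using UC_L[OF x] UC_iff x by blast
    then show ?thesis unfolding Scol_def Fm_def using c2_iff by (auto split: if_splits)
  qed
  have UCb: "card (UC x) \<le> (if x \<in> Lv then 5 else 4)" if x: "x \<in> V - HVs" for x
  proof (cases "x \<in> Lv")
    case True
    then have "card (UC x) \<le> card (s x)" using UC_L card_mono A.fincand s1 by (meson finite_subset)
    then show ?thesis using True s1 by simp
  next
    case False
    then show ?thesis using UC_C x unfolding Cp_def by auto
  qed
  have hypb': "\<And>u v. u \<in> V - HVs \<Longrightarrow> v \<in> V - HVs \<Longrightarrow> Gm u v \<Longrightarrow> u \<notin> Lv \<Longrightarrow>
      10 \<le> card (Scol E ends c1 u - Scol E ends c1 v \<union> (Scol E ends c1 v - Scol E ends c1 u))"
  proof -
    fix u v assume a: "u \<in> V - HVs" "v \<in> V - HVs" "Gm u v" "u \<notin> Lv"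
    show "10 \<le> card (Scol E ends c1 u - Scol E ends c1 v \<union> (Scol E ends c1 v - Scol E ends c1 u))"
      using hypb[rule_format, of u v] a unfolding c1_def Lv_def HVs_def Gm_def by simp
  qed
  have evb: "Scol E ends c2 u \<noteq> Scol E ends c2 v"
    if u: "u \<in> V - HVs" and v: "v \<in> V - HVs" and g: "Gm u v" for u v
  proof (cases "u \<in> Lv \<and> v \<in> Lv")
    case True
    have "u \<noteq> v" using g adj_ne unfolding Gm_def by auto
    then show ?thesis using s4 True g SL by auto
  next
    case False
    have c9: "card (Rm u) + card (Rm v) \<le> 9"
      using Rcard[of u] Rcard[of v] UCb[OF u] UCb[OF v] False by (auto split: if_splits)
    have h10: "10 \<le> card (Scol E ends c1 u - Scol E ends c1 v \<union> (Scol E ends c1 v - Scol E ends c1 u))"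
    proof (cases "u \<in> Lv")
      case False
      then show ?thesis using hypb' u v g by blast
    next
      case True
      then have vL: "v \<notin> Lv" using \<open>\<not> (u \<in> Lv \<and> v \<in> Lv)\<close> by auto
      have "Gm v u" using g adj_sym unfolding Gm_def by auto
      then show ?thesis using hypb'[OF v u _ vL] by (simp add: Un_commute)
    qed
    show ?thesis by (rule symdiff_ne[OF finR finR Ssub Rsub Ssub Rsub c9 h10])
  qed
  have mem: "s \<in> set_pmf (phase2_dist V E ends c1)"
  proof -
    have pd: "phase2_dist V E ends c1 = Pi_pmf Lv {} (\<lambda>u. pmf_of_set {S. S \<subseteq> cd u \<and> card S = 5})"
      unfolding phase2_dist_def Lv_def cd_def by simp
    have "s \<in> PiE_dflt Lv {} (set_pmf \<circ> (\<lambda>u. pmf_of_set {S. S \<subseteq> cd u \<and> card S = 5}))"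
      unfolding PiE_dflt_def
    proof (intro CollectI allI conjI impI)
      fix x assume x: "x \<in> Lv"
      have ne: "{S. S \<subseteq> cd x \<and> card S = 5} \<noteq> {}" using s1 x by auto
      have fin: "finite {S. S \<subseteq> cd x \<and> card S = 5}"
        using A.fincand[OF x] by (rule finite_subset[rotated, OF finite_Pow_iff[THEN iffD2]]) auto
      show "s x \<in> (set_pmf \<circ> (\<lambda>u. pmf_of_set {S. S \<subseteq> cd u \<and> card S = 5})) x"
        using set_pmf_of_set[OF ne fin] s1 x by simp
    next
      fix x assume "x \<notin> Lv" then show "s x = {}" using s2 by simp
    qed
    then show ?thesis unfolding pd set_Pi_pmf[OF finLv] .
  qed
  have ev: "s \<in> {ch. (\<forall>v\<in>V - HVs - Lv. card (UC2 V E ends c1 ch v) \<le> 4)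
        \<and> (\<forall>u\<in>V - HVs. \<forall>v\<in>V - HVs.
              adjacent E ends u v \<and> deg E ends u = deg E ends v \<longrightarrow>
              Scol E ends (phase2 V E ends c1 ch) u \<noteq> Scol E ends (phase2 V E ends c1 ch) v)}"
  proof (intro CollectI conjI ballI impI)
    fix v assume "v \<in> V - HVs - Lv"
    then show "card (UC2 V E ends c1 s v) \<le> 4" using UC_C unfolding UC_def Cp_def by simp
  next
    fix u v assume "u \<in> V - HVs" "v \<in> V - HVs" "adjacent E ends u v \<and> deg E ends u = deg E ends v"
    then show "Scol E ends (phase2 V E ends c1 s) u \<noteq> Scol E ends (phase2 V E ends c1 s) v"
      using evb unfolding c2_def Gm_def by simp
  qed
  have "measure_pmf.prob (phase2_dist V E ends c1) {ch. (\<forall>v\<in>V - HVs - Lv. card (UC2 V E ends c1 ch v) \<le> 4)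
        \<and> (\<forall>u\<in>V - HVs. \<forall>v\<in>V - HVs.
              adjacent E ends u v \<and> deg E ends u = deg E ends v \<longrightarrow>
              Scol E ends (phase2 V E ends c1 ch) u \<noteq> Scol E ends (phase2 V E ends c1 ch) v)} > 0"
    by (rule measure_pmf_posI[OF mem ev])
  then show ?thesis unfolding c1_def Lv_def HVs_def .
qed

end
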